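(* Every consistent theory $T$ of $L([1],[\omega],\mathtt u,\mathtt U)$ can be extended to a complete theory, i.e. there is a theory $T^*\supseteq T$ that is consistent and such that for every formula $\phi$, $T^*\vdash\phi$ or $T^*\vdash\neg\phi$.
   Context: Fix $Var=\{p_n : n\in\omega\}$. The formulas of $L([1],[\omega],\mathtt u,\mathtt U)$ form the smallest set containing $Var$ and closed under $\neg\phi$, $[1]\phi$, $[\omega]\phi$, $(\phi\wedge\psi)$, $(\phi\,\mathtt u\,\psi)$, $(\phi\,\mathtt U\,\psi)$. Abbreviations: $\vee,\to,\leftrightarrow$ as usual; $\mathtt f\phi:=(\phi\to\phi)\,\mathtt u\,\phi$, $\mathtt g\phi:=\neg\mathtt f\neg\phi$; $[a]^0\phi:=\phi$, $[a]^{n+1}\phi:=[a][a]^n\phi$ for $a\in\{1,\omega\}$. A theory is a nonempty set of formulas. Proof system. Axioms: all instances of A1 substitution instances of classical tautologies; A2 $[1][\omega]\phi\leftrightarrow[\omega]\phi$; A3 $\neg[a]\phi\leftrightarrow[a]\neg\phi$ ($a\in\{1,\omega\}$); A4 $[a](\phi*\psi)\leftrightarrow([a]\phi*[a]\psi)$ ($a\in\{1,\omega\}$, $*\in\{\wedge,\vee,\to,\leftrightarrow\}$); A5 $\psi\to\phi\,\mathtt u\,\psi$; A6 $\phi\,\mathtt u\,\psi\to\phi\,\mathtt U\,\psi$; A7 $\big(\bigwedge_{k=0}^n[1]^k(\phi\wedge\neg\psi)\wedge[1]^{n+1}\psi\big)\to\phi\,\mathtt u\,\psi$ ($n\in\omega$);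 A8 $\big(\bigwedge_{k=0}^n[\omega]^k\mathtt g(\phi\wedge\neg\psi)\wedge[\omega]^{n+1}(\phi\,\mathtt u\,\psi)\big)\to\phi\,\mathtt U\,\psi$ ($n\in\omega$). Rules: R1 from $\phi$ and $\phi\to\psi$ infer $\psi$; R2 from $\phi$ infer $[a]\phi$, $a\in\{1,\omega\}$; R3 from $\theta\to\neg\psi$ and all $\theta\to\big(\bigvee_{k=0}^n[1]^k(\neg\phi\vee\psi)\vee[1]^{n+1}\neg\psi\big)$, $n\in\omega$, infer $\theta\to\neg(\phi\,\mathtt u\,\psi)$; R4 from $\theta\to\neg(\phi\,\mathtt u\,\psi)$ and all $\theta\to\big(\bigvee_{k=0}^n[\omega]^k\neg\mathtt g(\phi\wedge\neg\psi)\vee[\omega]^{n+1}\neg(\phi\,\mathtt u\,\psi)\big)$, $n\in\omega$, infer $\theta\to\neg(\phi\,\mathtt U\,\psi)$. $\vdash\phi$ ($\phi$ is a theorem) iff there is a sequence $(\phi_\beta)_{\beta\le\alpha}$, $\alpha$ a countable ordinal, with $\phi_\alpha=\phi$ and each $\phi_\beta$ an axiom or obtained from earlier members by a rule. $T\vdash\phi$ iff there is such a sequence in which each member is an axiom, a member of $T$, or obtained from earlier members by a rule, where R2 may only be applied to theorems. A theory $T$ is consistent iff there is no formula $\chi$ with $T\vdash\chi$ and $T\vdash\neg\chi$. *)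

theory Defs
  imports Main
begin

datatype fm =
    Var nat
  | Neg fm
  | Box1 fm
  | BoxW fm
  | And fm fm
  | Uu fm fm
  | UU fm fm

definition Or :: "fm \<Rightarrow> fm \<Rightarrow> fm" where "Or a b = Neg (And (Neg a) (Neg b))"
definition Imp :: "fm \<Rightarrow> fm \<Rightarrow> fm" where "Imp a b = Neg (And a (Neg b))"
definition Iff :: "fm \<Rightarrow> fm \<Rightarrow> fm" where "Iff a b = And (Imp a b) (Imp b a)"

definition Ff :: "fm \<Rightarrow> fm" where "Ff a = Uu (Imp a a) a"
definition Gg :: "fm \<Rightarrow> fm" where "Gg a = Neg (Ff (Neg a))"

datatype modality = M1 | MW

fun box :: "modality \<Rightarrow> fm \<Rightarrow> fm" where
  "box M1 a = Box1 a"
| "box MW a = BoxW a"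

definition boxn :: "modality \<Rightarrow> nat \<Rightarrow> fm \<Rightarrow> fm" where
  "boxn m n a = (box m ^^ n) a"

fun bigAnd :: "(nat \<Rightarrow> fm) \<Rightarrow> nat \<Rightarrow> fm" where
  "bigAnd f 0 = f 0"
| "bigAnd f (Suc n) = And (bigAnd f n) (f (Suc n))"

fun bigOr :: "(nat \<Rightarrow> fm) \<Rightarrow> nat \<Rightarrow> fm" where
  "bigOr f 0 = f 0"
| "bigOr f (Suc n) = Or (bigOr f n) (f (Suc n))"

text \<open>Truth-functional evaluation: formulas not headed by negation or conjunction
  are treated as propositional atoms. A formula is a substitution instance of a
  classical tautology iff it is true under every such evaluation.\<close>
fun peval :: "(fm \<Rightarrow> bool) \<Rightarrow> fm \<Rightarrow> bool" where
  "peval v (Neg a) = (\<not> peval v a)"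
| "peval v (And a b) = (peval v a \<and> peval v b)"
| "peval v a = v a"

definition taut_inst :: "fm \<Rightarrow> bool" where
  "taut_inst a \<longleftrightarrow> (\<forall>v. peval v a)"

inductive axiom :: "fm \<Rightarrow> bool" where
  A1: "taut_inst a \<Longrightarrow> axiom a"
| A2: "axiom (Iff (Box1 (BoxW a)) (BoxW a))"
| A3: "axiom (Iff (Neg (box m a)) (box m (Neg a)))"
| A4_and: "axiom (Iff (box m (And a b)) (And (box m a) (box m b)))"
| A4_or: "axiom (Iff (box m (Or a b)) (Or (box m a) (box m b)))"
| A4_imp: "axiom (Iff (box m (Imp a b)) (Imp (box m a) (box m b)))"
| A4_iff: "axiom (Iff (box m (Iff a b)) (Iff (box m a) (box m b)))"
| A5: "axiom (Imp b (Uu a b))"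
| A6: "axiom (Imp (Uu a b) (UU a b))"
| A7: "axiom (Imp (And (bigAnd (\<lambda>k. boxn M1 k (And a (Neg b))) n) (boxn M1 (Suc n) b))
                   (Uu a b))"
| A8: "axiom (Imp (And (bigAnd (\<lambda>k. boxn MW k (Gg (And a (Neg b)))) n)
                        (boxn MW (Suc n) (Uu a b)))
                   (UU a b))"

text \<open>The paper defines derivations as sequences of countable ordinal length. Since
  every rule has at most countably many premises, the set of formulas derivable in
  this sense is exactly the least set closed under the axioms and rules, which we
  define inductively.\<close>

inductive provable :: "fm \<Rightarrow> bool" where
  ax: "axiom a \<Longrightarrow> provable a"
| R1: "provable a \<Longrightarrow> provable (Imp a b) \<Longrightarrow> provable b"
| R2: "provable a \<Longrightarrow> provable (box m a)"
| R3: "provable (Imp th (Neg b)) \<Longrightarrow>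
       (\<forall>n. provable (Imp th (Or (bigOr (\<lambda>k. boxn M1 k (Or (Neg a) b)) n)
                             (boxn M1 (Suc n) (Neg b))))) \<Longrightarrow>
       provable (Imp th (Neg (Uu a b)))"
| R4: "provable (Imp th (Neg (Uu a b))) \<Longrightarrow>
       (\<forall>n. provable (Imp th (Or (bigOr (\<lambda>k. boxn MW k (Neg (Gg (And a (Neg b))))) n)
                             (boxn MW (Suc n) (Neg (Uu a b)))))) \<Longrightarrow>
       provable (Imp th (Neg (UU a b)))"

text \<open>Derivability from a theory T: R2 may only be applied to theorems.\<close>
inductive derives :: "fm set \<Rightarrow> fm \<Rightarrow> bool" where
  d_ax: "axiom a \<Longrightarrow> derives T a"
| d_hyp: "a \<in> T \<Longrightarrow> derives T a"
| d_R1: "derives T a \<Longrightarrow> derives T (Imp a b) \<Longrightarrow> derives T b"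
| d_R2: "provable a \<Longrightarrow> derives T (box m a)"
| d_R3: "derives T (Imp th (Neg b)) \<Longrightarrow>
       (\<forall>n. derives T (Imp th (Or (bigOr (\<lambda>k. boxn M1 k (Or (Neg a) b)) n)
                             (boxn M1 (Suc n) (Neg b))))) \<Longrightarrow>
       derives T (Imp th (Neg (Uu a b)))"
| d_R4: "derives T (Imp th (Neg (Uu a b))) \<Longrightarrow>
       (\<forall>n. derives T (Imp th (Or (bigOr (\<lambda>k. boxn MW k (Neg (Gg (And a (Neg b))))) n)
                             (boxn MW (Suc n) (Neg (Uu a b)))))) \<Longrightarrow>
       derives T (Imp th (Neg (UU a b)))"

definition is_theory :: "fm set \<Rightarrow> bool" where
  "is_theory T \<longleftrightarrow> T \<noteq> {}"

definition consistent :: "fm set \<Rightarrow> bool" where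
  "consistent T \<longleftrightarrow> \<not> (\<exists>c. derives T c \<and> derives T (Neg c))"

definition complete :: "fm set \<Rightarrow> bool" where
  "complete T \<longleftrightarrow> (\<forall>a. derives T a \<or> derives T (Neg a))"

end

theory Submission
  imports Defs "HOL-Library.Countable"
begin

instance fm :: countable by countable_datatype

abbreviation Du :: "fm \<Rightarrow> fm \<Rightarrow> nat \<Rightarrow> fm" where
  "Du a b n \<equiv> Or (bigOr (\<lambda>k. boxn M1 k (Or (Neg a) b)) n) (boxn M1 (Suc n) (Neg b))"
abbreviation DU :: "fm \<Rightarrow> fm \<Rightarrow> nat \<Rightarrow> fm" where
  "DU a b n \<equiv> Or (bigOr (\<lambda>k. boxn MW k (Neg (Gg (And a (Neg b))))) n) (boxn MW (Suc n) (Neg (Uu a b)))"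

lemma derives_mono: "derives S a \<Longrightarrow> S \<subseteq> S' \<Longrightarrow> derives S' a"
proof (induction rule: derives.induct)
  case (d_R3 T th b a)
  then show ?case by (auto intro!: derives.d_R3)
next
  case (d_R4 T th a b)
  then show ?case by (auto intro!: derives.d_R4)
qed (auto intro: derives.intros)

lemma tm: "taut_inst (Imp a b) \<Longrightarrow> derives T a \<Longrightarrow> derives T b"
  by (meson axiom.A1 derives.d_R1 derives.d_ax)

lemma tm0: "taut_inst a \<Longrightarrow> derives T a"
  by (simp add: axiom.A1 derives.d_ax)

lemma tm2: "taut_inst (Imp a (Imp b c)) \<Longrightarrow> derives T a \<Longrightarrow> derives T b \<Longrightarrow> derives T c"
proof -
  assume "taut_inst (Imp a (Imp b c))" "derives T a" "derives T b"
  then have "derives T (Imp b c)" using derives.d_R1[OF _ tm0] by blast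
  with \<open>derives T b\<close> show ?thesis by (rule derives.d_R1)
qed

lemma t_k: "taut_inst (Imp q (Imp p q))" by (auto simp: taut_inst_def Imp_def)
lemma t_id: "taut_inst (Imp p p)" by (auto simp: taut_inst_def Imp_def)
lemma t_mp: "taut_inst (Imp (Imp p a) (Imp (Imp p (Imp a b)) (Imp p b)))" by (auto simp: taut_inst_def Imp_def)
lemma t_exp: "taut_inst (Imp (Imp p (Imp th x)) (Imp (And p th) x))" by (auto simp: taut_inst_def Imp_def)
lemma t_imp: "taut_inst (Imp (Imp (And p th) x) (Imp p (Imp th x)))" by (auto simp: taut_inst_def Imp_def)
lemma t_neg: "taut_inst (Imp (Imp p c) (Imp (Imp p (Neg c)) (Neg p)))" by (auto simp: taut_inst_def Imp_def)
lemma t_nn: "taut_inst (Imp (Imp (Neg f) (Neg (Neg (Imp th x)))) (Imp (And th (Neg f)) x))" by (auto simp: taut_inst_def Imp_def)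
lemma t_fin: "taut_inst (Imp (Imp (And th (Neg (Imp th (Neg u)))) (Neg u)) (Imp th (Neg u)))" by (auto simp: taut_inst_def Imp_def)

lemma deduction: "derives S q \<Longrightarrow> S = insert p T \<Longrightarrow> derives T (Imp p q)"
proof (induction rule: derives.induct)
  case (d_ax a S)
  then show ?case using tm[OF t_k] derives.d_ax by blast
next
  case (d_hyp a S)
  show ?case
  proof (cases "a = p")
    case True
    then show ?thesis using tm0[OF t_id] by simp
  next
    case False
    then have "derives T a" using d_hyp by (auto intro: derives.d_hyp)
    then show ?thesis using tm[OF t_k] by blast
  qed
next
  case (d_R1 S a b)
  then show ?case using tm2[OF t_mp] by blast
next
  case (d_R2 a S m)
  then show ?case using tm[OF t_k] derives.d_R2 by blast
next
  case (d_R3 S th b a)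
  have 1: "derives T (Imp (And p th) (Neg b))"
    using d_R3 tm[OF t_exp] by blast
  have 2: "\<forall>n. derives T (Imp (And p th) (Du a b n))"
  proof
    fix n
    have "derives T (Imp p (Imp th (Du a b n)))" using d_R3 by blast
    then show "derives T (Imp (And p th) (Du a b n))" by (rule tm[OF t_exp])
  qed
  have "derives T (Imp (And p th) (Neg (Uu a b)))" using 1 2 by (rule derives.d_R3)
  then show ?case by (rule tm[OF t_imp])
next
  case (d_R4 S th a b)
  have 1: "derives T (Imp (And p th) (Neg (Uu a b)))"
    using d_R4 tm[OF t_exp] by blast
  have 2: "\<forall>n. derives T (Imp (And p th) (DU a b n))"
  proof
    fix n
    have "derives T (Imp p (Imp th (DU a b n)))" using d_R4 by blast
    then show "derives T (Imp (And p th) (DU a b n))" by (rule tm[OF t_exp])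
  qed
  have "derives T (Imp (And p th) (Neg (UU a b)))" using 1 2 by (rule derives.d_R4)
  then show ?case by (rule tm[OF t_imp])
qed

lemma incons_neg: "\<not> consistent (insert p T) \<Longrightarrow> derives T (Neg p)"
proof -
  assume "\<not> consistent (insert p T)"
  then obtain c where "derives (insert p T) c" "derives (insert p T) (Neg c)"
    unfolding consistent_def by blast
  then have "derives T (Imp p c)" "derives T (Imp p (Neg c))" using deduction by auto
  then show ?thesis by (rule tm2[OF t_neg])
qed

lemma incons: "derives T a \<Longrightarrow> derives T (Neg a) \<Longrightarrow> \<not> consistent T"
  unfolding consistent_def by blast

definition Cu where "Cu th a b = insert (Neg (Imp th (Neg b))) (range (\<lambda>n. Neg (Imp th (Du a b n))))"
definition CU where "CU th a b = insert (Neg (Imp th (Neg (Uu a b)))) (range (\<lambda>n. Neg (Imp th (DU a b n))))"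

definition C where "C \<phi> = {w. \<exists>th a b. \<phi> = Imp th (Neg (Uu a b)) \<and> w \<in> Cu th a b}
   \<union> {w. \<exists>th a b. \<phi> = Imp th (Neg (UU a b)) \<and> w \<in> CU th a b}"

lemma C_u: "C (Imp th (Neg (Uu a b))) = Cu th a b"
  unfolding C_def by (auto simp: Imp_def)
lemma C_U: "C (Imp th (Neg (UU a b))) = CU th a b"
  unfolding C_def by (auto simp: Imp_def)

lemma wit_u:
  assumes S: "consistent S" and ni: "\<not> consistent (insert \<phi> S)" and phi: "\<phi> = Imp th (Neg (Uu a b))"
  shows "\<exists>w\<in>Cu th a b. consistent (insert w (insert (Neg \<phi>) S))"
proof (rule ccontr)
  assume "\<not> ?thesis"
  then have all: "\<And>w. w \<in> Cu th a b \<Longrightarrow> derives S (Imp (Neg \<phi>) (Neg w))"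
    using incons_neg deduction by blast
  have 1: "derives S (Imp (And th (Neg \<phi>)) (Neg b))"
    using all[of "Neg (Imp th (Neg b))"] tm[OF t_nn] by (auto simp: Cu_def)
  have 2: "\<forall>n. derives S (Imp (And th (Neg \<phi>)) (Du a b n))"
  proof
    fix n show "derives S (Imp (And th (Neg \<phi>)) (Du a b n))"
      using all[of "Neg (Imp th (Du a b n))"] tm[OF t_nn] by (auto simp: Cu_def)
  qed
  have "derives S (Imp (And th (Neg \<phi>)) (Neg (Uu a b)))" using 1 2 by (rule derives.d_R3)
  then have "derives S \<phi>"
    unfolding phi by (rule tm[OF t_fin])
  then show False using incons_neg[OF ni] S incons by blast
qed

lemma wit_U:
  assumes S: "consistent S" and ni: "\<not> consistent (insert \<phi> S)" and phi: "\<phi> = Imp th (Neg (UU a b))"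
  shows "\<exists>w\<in>CU th a b. consistent (insert w (insert (Neg \<phi>) S))"
proof (rule ccontr)
  assume "\<not> ?thesis"
  then have all: "\<And>w. w \<in> CU th a b \<Longrightarrow> derives S (Imp (Neg \<phi>) (Neg w))"
    using incons_neg deduction by blast
  have 1: "derives S (Imp (And th (Neg \<phi>)) (Neg (Uu a b)))"
    using all[of "Neg (Imp th (Neg (Uu a b)))"] tm[OF t_nn] by (auto simp: CU_def)
  have 2: "\<forall>n. derives S (Imp (And th (Neg \<phi>)) (DU a b n))"
  proof
    fix n show "derives S (Imp (And th (Neg \<phi>)) (DU a b n))"
      using all[of "Neg (Imp th (DU a b n))"] tm[OF t_nn] by (auto simp: CU_def)
  qed
  have "derives S (Imp (And th (Neg \<phi>)) (Neg (UU a b)))" using 1 2 by (rule derives.d_R4)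
  then have "derives S \<phi>"
    unfolding phi by (rule tm[OF t_fin])
  then show False using incons_neg[OF ni] S incons by blast
qed

lemma wit:
  assumes S: "consistent S" and ni: "\<not> consistent (insert \<phi> S)" and ne: "C \<phi> \<noteq> {}"
  shows "\<exists>w\<in>C \<phi>. consistent (insert w (insert (Neg \<phi>) S))"
proof -
  from ne obtain th a b where "\<phi> = Imp th (Neg (Uu a b)) \<or> \<phi> = Imp th (Neg (UU a b))"
    unfolding C_def by blast
  then show ?thesis
  proof
    assume p: "\<phi> = Imp th (Neg (Uu a b))"
    show ?thesis using wit_u[OF S ni p] unfolding p C_u .
  next
    assume p: "\<phi> = Imp th (Neg (UU a b))"
    show ?thesis using wit_U[OF S ni p] unfolding p C_U .
  qed
qed

definition step :: "fm set \<Rightarrow> fm \<Rightarrow> fm set" where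
  "step S \<phi> = (if consistent (insert \<phi> S) then insert \<phi> S
     else if C \<phi> = {} then insert (Neg \<phi>) S
     else insert (SOME w. w \<in> C \<phi> \<and> consistent (insert w (insert (Neg \<phi>) S))) (insert (Neg \<phi>) S))"

lemma step_cons: "consistent S \<Longrightarrow> consistent (step S \<phi>)"
proof -
  assume S: "consistent S"
  show ?thesis
  proof (cases "consistent (insert \<phi> S)")
    case True then show ?thesis by (simp add: step_def)
  next
    case False
    have c1: "consistent (insert (Neg \<phi>) S)"
    proof (rule ccontr)
      assume "\<not> consistent (insert (Neg \<phi>) S)"
      then have "derives S (Neg (Neg \<phi>))" by (rule incons_neg)
      then show False using incons_neg[OF False] S incons by blast
    qed
    show ?thesis
    proof (cases "C \<phi> = {}")
      case True then show ?thesis using False c1 by (simp add: step_def)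
    next
      case ne: False
      from wit[OF S False ne] have "\<exists>w. w \<in> C \<phi> \<and> consistent (insert w (insert (Neg \<phi>) S))" by blast
      then have "consistent (insert (SOME w. w \<in> C \<phi> \<and> consistent (insert w (insert (Neg \<phi>) S))) (insert (Neg \<phi>) S))"
        by (rule someI2_ex) simp
      then show ?thesis using False ne by (simp add: step_def)
    qed
  qed
qed

lemma step_sub: "S \<subseteq> step S \<phi>"
  by (auto simp: step_def)

lemma step_mem: "\<phi> \<in> step S \<phi> \<or> Neg \<phi> \<in> step S \<phi>"
  by (auto simp: step_def)

lemma step_wit: "\<phi> \<notin> step S \<phi> \<Longrightarrow> consistent S \<Longrightarrow> C \<phi> \<noteq> {} \<Longrightarrow> \<exists>w\<in>C \<phi>. w \<in> step S \<phi>"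
proof -
  assume a: "\<phi> \<notin> step S \<phi>" "consistent S" "C \<phi> \<noteq> {}"
  then have nc: "\<not> consistent (insert \<phi> S)" by (auto simp: step_def split: if_splits)
  from wit[OF a(2) nc a(3)] have "\<exists>w. w \<in> C \<phi> \<and> consistent (insert w (insert (Neg \<phi>) S))" by blast
  then have "(SOME w. w \<in> C \<phi> \<and> consistent (insert w (insert (Neg \<phi>) S))) \<in> C \<phi>"
    by (rule someI2_ex) simp
  then show ?thesis using nc a(3) by (auto simp: step_def)
qed

primrec Tn :: "fm set \<Rightarrow> nat \<Rightarrow> fm set" where
  "Tn T 0 = T"
| "Tn T (Suc n) = step (Tn T n) (from_nat n)"

lemma Tn_cons: "consistent T \<Longrightarrow> consistent (Tn T n)"
  by (induction n) (auto intro: step_cons)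

lemma Tn_mono: "m \<le> n \<Longrightarrow> Tn T m \<subseteq> Tn T n"
proof (induction n)
  case 0 then show ?case by simp
next
  case (Suc n)
  then show ?case using step_sub[of "Tn T n" "from_nat n"] by (auto simp: le_Suc_eq)
qed

definition Tstar where "Tstar T = (\<Union>n. Tn T n)"

lemma in_star: "x \<in> Tn T n \<Longrightarrow> x \<in> Tstar T"
  unfolding Tstar_def by blast

lemma two_in: "a \<in> Tstar T \<Longrightarrow> b \<in> Tstar T \<Longrightarrow> \<exists>M. a \<in> Tn T M \<and> b \<in> Tn T M"
proof -
  assume "a \<in> Tstar T" "b \<in> Tstar T"
  then obtain i j where "a \<in> Tn T i" "b \<in> Tn T j" by (auto simp: Tstar_def)
  then show ?thesis using Tn_mono[of i "max i j" T] Tn_mono[of j "max i j" T] by auto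
qed

lemma star_nocontr: "consistent T \<Longrightarrow> a \<in> Tstar T \<Longrightarrow> Neg a \<in> Tstar T \<Longrightarrow> False"
  using two_in Tn_cons incons derives.d_hyp by metis

lemma phi_step: "Tn T (Suc (to_nat \<phi>)) = step (Tn T (to_nat \<phi>)) \<phi>"
  by simp

lemma der_in: "consistent T \<Longrightarrow> derives (Tn T m) \<phi> \<Longrightarrow> \<phi> \<in> Tstar T"
proof (rule ccontr)
  assume c: "consistent T" and d: "derives (Tn T m) \<phi>" and n: "\<phi> \<notin> Tstar T"
  let ?j = "Suc (to_nat \<phi>)"
  have "\<phi> \<notin> Tn T ?j" using n in_star by blast
  then have "Neg \<phi> \<in> Tn T ?j" using step_mem[of \<phi> "Tn T (to_nat \<phi>)"] by simp
  then have "Neg \<phi> \<in> Tn T (max m ?j)" using Tn_mono[of ?j "max m ?j" T] by auto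
  moreover have "derives (Tn T (max m ?j)) \<phi>" using d Tn_mono[of m "max m ?j" T] derives_mono by auto
  ultimately show False using Tn_cons[OF c] incons derives.d_hyp by metis
qed

lemma closed: "derives S \<psi> \<Longrightarrow> S = Tstar T \<Longrightarrow> consistent T \<Longrightarrow> \<psi> \<in> Tstar T"
proof (induction rule: derives.induct)
  case (d_ax a S)
  then show ?case using der_in[of T 0] derives.d_ax by blast
next
  case (d_hyp a S)
  then show ?case by simp
next
  case (d_R1 S a b)
  then obtain M where "a \<in> Tn T M" "Imp a b \<in> Tn T M" using two_in by blast
  then have "derives (Tn T M) b" by (meson derives.d_R1 derives.d_hyp)
  then show ?case using der_in d_R1 by blast
next
  case (d_R2 a S m)
  then show ?case using der_in[of T 0] derives.d_R2 by blast
next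
  case (d_R3 S th b a)
  let ?p = "Imp th (Neg (Uu a b))"
  show ?case
  proof (rule ccontr)
    assume n: "?p \<notin> Tstar T"
    let ?j = "to_nat ?p"
    have "?p \<notin> step (Tn T ?j) ?p" using n phi_step[of T ?p] in_star[of ?p T "Suc ?j"] by auto
    moreover have "C ?p \<noteq> {}" by (simp add: C_u Cu_def)
    ultimately obtain w where w: "w \<in> Cu th a b" "w \<in> step (Tn T ?j) ?p"
      using step_wit Tn_cons d_R3.prems(2) C_u by metis
    then have ws: "w \<in> Tstar T" using phi_step[of T ?p] in_star[of w T "Suc ?j"] by simp
    from w(1) consider "w = Neg (Imp th (Neg b))" | n where "w = Neg (Imp th (Du a b n))"
      by (auto simp: Cu_def)
    then show False
    proof cases
      case 1 then show False using ws d_R3 star_nocontr by blast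
    next
      case (2 n) then show False using ws d_R3 star_nocontr by blast
    qed
  qed
next
  case (d_R4 S th a b)
  let ?p = "Imp th (Neg (UU a b))"
  show ?case
  proof (rule ccontr)
    assume n: "?p \<notin> Tstar T"
    let ?j = "to_nat ?p"
    have "?p \<notin> step (Tn T ?j) ?p" using n phi_step[of T ?p] in_star[of ?p T "Suc ?j"] by auto
    moreover have "C ?p \<noteq> {}" by (simp add: C_U CU_def)
    ultimately obtain w where w: "w \<in> CU th a b" "w \<in> step (Tn T ?j) ?p"
      using step_wit Tn_cons d_R4.prems(2) C_U by metis
    then have ws: "w \<in> Tstar T" using phi_step[of T ?p] in_star[of w T "Suc ?j"] by simp
    from w(1) consider "w = Neg (Imp th (Neg (Uu a b)))" | n where "w = Neg (Imp th (DU a b n))"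
      by (auto simp: CU_def)
    then show False
    proof cases
      case 1 then show False using ws d_R4 star_nocontr by blast
    next
      case (2 n) then show False using ws d_R4 star_nocontr by blast
    qed
  qed
qed

theorem mainTheorem6:
  fixes T :: "fm set"
  assumes "is_theory T" and "consistent T"
  shows "\<exists>T'. is_theory T' \<and> T \<subseteq> T' \<and> consistent T' \<and> complete T'"
proof (intro exI conjI)
  show sub: "T \<subseteq> Tstar T" unfolding Tstar_def using Tn.simps(1) by blast
  then show "is_theory (Tstar T)" using assms(1) by (auto simp: is_theory_def)
  show "consistent (Tstar T)"
    unfolding consistent_def using closed[OF _ refl assms(2)] star_nocontr[OF assms(2)] by blast
  show "complete (Tstar T)"
    unfolding complete_def
  proof
    fix a
    have "a \<in> Tn T (Suc (to_nat a)) \<or> Neg a \<in> Tn T (Suc (to_nat a))"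
      using step_mem[of a] by simp
    then show "derives (Tstar T) a \<or> derives (Tstar T) (Neg a)"
      using in_star derives.d_hyp by metis
  qed
qed

end
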